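(* Let $(\mathcal{L},\mathcal{M},\hat{\mathcal{L}},\hat{\mathcal{M}})$ satisfy the Lax-Sato equations $\frac{\partial K}{\partial t_{mn}}=\{H_{mn},K\}$ for $K\in\{\mathcal{L},\mathcal{M},\hat{\mathcal{L}},\hat{\mathcal{M}}\}$ together with $\{\mathcal{L},\mathcal{M}\}=\{\hat{\mathcal{L}},\hat{\mathcal{M}}\}=1$. Then for all $i\ge 1$ and all $m+n\ge 1$, $$\frac{\partial \hat v_{i+1}}{\partial t_{mn}}=-\operatorname{res}\,\hat{\mathcal{L}}^{i}\,dH_{mn},\qquad \frac{\partial v_{i+1}}{\partial t_{mn}}=\operatorname{res}\,\mathcal{L}^{i}\,dH_{mn}.$$
   Context: Variables: $t=(t_{mn})$ with $m,n\in\mathbb{N}$, $m+n\ge 1$, $t_{10}\equiv z$, $t_{01}\equiv\hat z$; $p$ is a complex parameter. Poisson bracket: $\{A,B\}=\frac{\partial A}{\partial p}\frac{\partial B}{\partial z}-\frac{\partial A}{\partial z}\frac{\partial B}{\partial p}$. $\mathcal{L}=p+\sum_{i\le 0}f_i(t)p^i$, $\hat{\mathcal{L}}=\frac{u(t)}{p}+\sum_{i\ge 0}g_i(t)p^i$ are formal Laurent series in $p$. $(\cdot)_{>0}$, $(\cdot)_{\le 0}$ denote the parts with positive, resp. non-positive, powers of $p$. $H_{mn}=(\mathcal{L}^m)_{>0}+(\hat{\mathcal{L}}^n)_{\le 0}$. $\mathcal{M}=\sum_{m+n\ge 2}m\,t_{mn}\mathcal{L}^{m-1}+z+\sum_{i=1}^{\infty}v_{i+1}\mathcal{L}^{-i-1}$,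 $\hat{\mathcal{M}}=\sum_{m+n\ge 2}n\,t_{mn}\hat{\mathcal{L}}^{n-1}+\hat z+\sum_{i=1}^{\infty}\hat v_{i+1}\hat{\mathcal{L}}^{-i-1}$. Formal residue of a 1-form in $p$: $\operatorname{res}\sum_n a_np^n\,dp=a_{-1}$; here $dH_{mn}$ means $\frac{\partial H_{mn}}{\partial p}dp$, so $\operatorname{res}\,A\,dH_{mn}$ is the coefficient of $p^{-1}$ in $A\,\partial_pH_{mn}$. *)

theory Defs
  imports "HOL-Analysis.Analysis"
begin

text \<open>Times: t :: (nat \<times> nat) \<Rightarrow> complex, with z = t(1,0), zhat = t(0,1).
  A (pointwise-in-t) formal Laurent series in p is a coefficient function
  int \<Rightarrow> complex (value at k = coefficient of p^k); a t-dependent series is a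
  function tm \<Rightarrow> ser.\<close>

type_synonym tm = "nat \<times> nat \<Rightarrow> complex"
type_synonym ser = "int \<Rightarrow> complex"
type_synonym fser = "tm \<Rightarrow> ser"

definition fin_times :: "tm \<Rightarrow> bool" where
  "fin_times t \<longleftrightarrow> finite {x. t x \<noteq> 0}"

definition lmul :: "ser \<Rightarrow> ser \<Rightarrow> ser" where
  "lmul a b = (\<lambda>k. infsum (\<lambda>j. a j * b (k - j)) UNIV)"

definition sone :: ser where
  "sone = (\<lambda>k. if k = 0 then 1 else 0)"

primrec spow :: "ser \<Rightarrow> nat \<Rightarrow> ser" where
  "spow a 0 = sone"
| "spow a (Suc n) = lmul a (spow a n)"

definition sinv_up :: "ser \<Rightarrow> ser" where
  "sinv_up a = (THE b. (\<exists>N. \<forall>k>N. b k = 0) \<and> lmul b a = sone)"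

definition sinv_down :: "ser \<Rightarrow> ser" where
  "sinv_down a = (THE b. (\<exists>N. \<forall>k<N. b k = 0) \<and> lmul b a = sone)"

definition dp :: "ser \<Rightarrow> ser" where
  "dp a = (\<lambda>k. of_int (k + 1) * a (k + 1))"

definition spos :: "ser \<Rightarrow> ser" where
  "spos a = (\<lambda>k. if k > 0 then a k else 0)"

definition snonpos :: "ser \<Rightarrow> ser" where
  "snonpos a = (\<lambda>k. if k \<le> 0 then a k else 0)"

definition sres :: "ser \<Rightarrow> complex" where
  "sres a = a (-1)"

definition pdt :: "nat \<times> nat \<Rightarrow> fser \<Rightarrow> tm \<Rightarrow> ser" where
  "pdt mn F t = (\<lambda>k. deriv (\<lambda>s. F (t(mn := s)) k) (t mn))"

definition pbr :: "fser \<Rightarrow> fser \<Rightarrow> fser" where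
  "pbr A B t = (\<lambda>k. lmul (dp (A t)) (pdt (1,0) B t) k
                   - lmul (pdt (1,0) A t) (dp (B t)) k)"

definition Lop :: "(int \<Rightarrow> tm \<Rightarrow> complex) \<Rightarrow> fser" where
  "Lop f t = (\<lambda>k. if k = 1 then 1 else if k \<le> 0 then f k t else 0)"

definition Lhop :: "(tm \<Rightarrow> complex) \<Rightarrow> (int \<Rightarrow> tm \<Rightarrow> complex) \<Rightarrow> fser" where
  "Lhop u g t = (\<lambda>k. if k = -1 then u t else if k \<ge> 0 then g k t else 0)"

definition Hop :: "fser \<Rightarrow> fser \<Rightarrow> nat \<Rightarrow> nat \<Rightarrow> fser" where
  "Hop L Lh m n t = (\<lambda>k. spos (spow (L t) m) k + snonpos (spow (Lh t) n) k)"

definition Mop :: "fser \<Rightarrow> (nat \<Rightarrow> tm \<Rightarrow> complex) \<Rightarrow> fser" where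
  "Mop L v t = (\<lambda>k.
     infsum (\<lambda>(m,n). of_nat m * t (m,n) * spow (L t) (m - 1) k) {(m,n). m + n \<ge> 2}
     + (if k = 0 then t (1,0) else 0)
     + infsum (\<lambda>i. v (i + 1) t * spow (sinv_up (L t)) (i + 1) k) {1..})"

definition Mhop :: "fser \<Rightarrow> (nat \<Rightarrow> tm \<Rightarrow> complex) \<Rightarrow> fser" where
  "Mhop Lh vh t = (\<lambda>k.
     infsum (\<lambda>(m,n). of_nat n * t (m,n) * spow (Lh t) (n - 1) k) {(m,n). m + n \<ge> 2}
     + (if k = 0 then t (0,1) else 0)
     + infsum (\<lambda>i. vh (i + 1) t * spow (sinv_down (Lh t)) (i + 1) k) {1..})"

definition lax_eq :: "fser \<Rightarrow> fser \<Rightarrow> fser \<Rightarrow> bool" where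
  "lax_eq L Lh K \<longleftrightarrow> (\<forall>t m n k. fin_times t \<longrightarrow> m + n \<ge> 1 \<longrightarrow>
      ((\<lambda>s. K (t((m,n) := s)) k) has_field_derivative pbr (Hop L Lh m n) K t k) (at (t (m,n))))"

end

theory Submission
  imports Defs "HOL-Computational_Algebra.Formal_Laurent_Series"
begin
unbundle fps_syntax


lemma fls_times_nth_bounds:
  fixes f g :: "'a::comm_ring_1 fls"
  assumes f0: "\<And>k. k < Na \<Longrightarrow> f $$ k = 0" and g0: "\<And>k. k < Nb \<Longrightarrow> g $$ k = 0"
  shows "(f * g) $$ n = (\<Sum>j\<in>{Na..n-Nb}. f $$ j * g $$ (n - j))"
proof (cases "f = 0 \<or> g = 0")
  case True thus ?thesis by auto
next
  case False
  hence fn: "f \<noteq> 0" and gn: "g \<noteq> 0" by auto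
  have d1: "Na \<le> fls_subdegree f" by (rule fls_subdegree_geI[OF fn]) (use f0 in auto)
  have d2: "Nb \<le> fls_subdegree g" by (rule fls_subdegree_geI[OF gn]) (use g0 in auto)
  have "(f * g) $$ n = (\<Sum>i=fls_subdegree f..n - fls_subdegree g. f $$ i * g $$ (n - i))"
    by (rule fls_times_nth(2))
  also have "\<dots> = (\<Sum>j\<in>{Na..n-Nb}. f $$ j * g $$ (n - j))"
  proof (rule sum.mono_neutral_left)
    show "finite {Na..n - Nb}" by simp
    show "{fls_subdegree f..n - fls_subdegree g} \<subseteq> {Na..n - Nb}" using d1 d2 by auto
    show "\<forall>i\<in>{Na..n - Nb} - {fls_subdegree f..n - fls_subdegree g}. f $$ i * g $$ (n - i) = 0"
    proof
      fix i assume "i \<in> {Na..n - Nb} - {fls_subdegree f..n - fls_subdegree g}"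
      hence "i < fls_subdegree f \<or> n - i < fls_subdegree g" by auto
      thus "f $$ i * g $$ (n - i) = 0" by (auto simp: fls_eq0_below_subdegree)
    qed
  qed
  finally show ?thesis .
qed

lemma fls_times_vanish:
  fixes f g :: "'a::comm_ring_1 fls"
  assumes "\<And>k. k < Na \<Longrightarrow> f $$ k = 0" "\<And>k. k < Nb \<Longrightarrow> g $$ k = 0" "n < Na + Nb"
  shows "(f * g) $$ n = 0"
  using fls_times_nth_bounds[where Na=Na and Nb=Nb and f=f and g=g and n=n, OF assms(1,2)] assms(3) by simp

lemma fls_times_agree:
  fixes f g W :: "'a::comm_ring_1 fls"
  assumes "\<And>j. j \<le> n - Nb \<Longrightarrow> f $$ j = g $$ j" "\<And>k. k < Nb \<Longrightarrow> W $$ k = 0"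
  shows "(f * W) $$ n = (g * W) $$ n"
proof -
  have "((f - g) * W) $$ n = 0"
    by (rule fls_times_vanish[where Na="n - Nb + 1" and Nb=Nb]) (use assms in auto)
  thus ?thesis by (simp add: algebra_simps)
qed

definition hasd :: "(complex \<Rightarrow> complex fls) \<Rightarrow> complex fls \<Rightarrow> complex \<Rightarrow> bool" where
  "hasd F F' x \<longleftrightarrow> (\<exists>N. \<forall>s k. k < N \<longrightarrow> F s $$ k = 0) \<and>
     (\<forall>k. ((\<lambda>s. F s $$ k) has_field_derivative F' $$ k) (at x))"

lemma hasd_vanish:
  assumes "hasd F F' x"
  shows "\<exists>N. (\<forall>s k. k < N \<longrightarrow> F s $$ k = 0) \<and> (\<forall>k. k < N \<longrightarrow> F' $$ k = 0)"
proof -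
  obtain N where N: "\<forall>s k. k < N \<longrightarrow> F s $$ k = 0" using assms unfolding hasd_def by auto
  have "F' $$ k = 0" if "k < N" for k
  proof -
    have "((\<lambda>s. F s $$ k) has_field_derivative F' $$ k) (at x)" using assms unfolding hasd_def by auto
    moreover have "(\<lambda>s. F s $$ k) = (\<lambda>s. 0)" using N that by auto
    ultimately have "((\<lambda>s. 0) has_field_derivative F' $$ k) (at x)" by simp
    thus ?thesis using DERIV_const DERIV_unique by blast
  qed
  thus ?thesis using N by blast
qed

lemma hasd_const: "hasd (\<lambda>s. c) 0 x"
  unfolding hasd_def
  by (auto intro!: exI[of _ "fls_subdegree c"] simp: fls_eq0_below_subdegree)

lemma hasd_add:
  assumes "hasd F F' x" "hasd G G' x"
  shows "hasd (\<lambda>s. F s + G s) (F' + G') x"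
proof -
  obtain Na where Na: "\<forall>s k. k < Na \<longrightarrow> F s $$ k = 0" using assms(1) unfolding hasd_def by auto
  obtain Nb where Nb: "\<forall>s k. k < Nb \<longrightarrow> G s $$ k = 0" using assms(2) unfolding hasd_def by auto
  show ?thesis unfolding hasd_def
    using assms Na Nb
    by (auto intro!: exI[of _ "min Na Nb"] derivative_eq_intros simp: hasd_def)
qed

lemma hasd_mult:
  assumes "hasd F F' x" "hasd G G' x"
  shows "hasd (\<lambda>s. F s * G s) (F' * G x + F x * G') x"
proof -
  obtain Na where Na: "\<forall>s k. k < Na \<longrightarrow> F s $$ k = 0" "\<forall>k. k < Na \<longrightarrow> F' $$ k = 0"
    using hasd_vanish[OF assms(1)] by auto
  obtain Nb where Nb: "\<forall>s k. k < Nb \<longrightarrow> G s $$ k = 0" "\<forall>k. k < Nb \<longrightarrow> G' $$ k = 0"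
    using hasd_vanish[OF assms(2)] by auto
  have dF: "\<And>k. ((\<lambda>s. F s $$ k) has_field_derivative F' $$ k) (at x)" using assms(1) unfolding hasd_def by auto
  have dG: "\<And>k. ((\<lambda>s. G s $$ k) has_field_derivative G' $$ k) (at x)" using assms(2) unfolding hasd_def by auto
  have "((\<lambda>s. (F s * G s) $$ k) has_field_derivative (F' * G x + F x * G') $$ k) (at x)" for k
  proof -
    have e: "(\<lambda>s. (F s * G s) $$ k) = (\<lambda>s. \<Sum>j\<in>{Na..k-Nb}. F s $$ j * G s $$ (k - j))"
      using Na Nb by (intro ext fls_times_nth_bounds) auto
    have "((\<lambda>s. \<Sum>j\<in>{Na..k-Nb}. F s $$ j * G s $$ (k - j)) has_field_derivative
       (\<Sum>j\<in>{Na..k-Nb}. F' $$ j * G x $$ (k - j) + F x $$ j * G' $$ (k - j))) (at x)"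
      apply (rule DERIV_sum)
      apply (rule DERIV_cong[OF DERIV_mult[OF dF dG]])
      by (simp add: algebra_simps)
    moreover have "(F' * G x + F x * G') $$ k = (\<Sum>j\<in>{Na..k-Nb}. F' $$ j * G x $$ (k - j) + F x $$ j * G' $$ (k - j))"
      using Na Nb by (simp add: fls_times_nth_bounds[where Na=Na and Nb=Nb] sum.distrib)
    ultimately show ?thesis using e by simp
  qed
  thus ?thesis unfolding hasd_def using Na Nb
    by (auto intro!: exI[of _ "Na + Nb"] fls_times_vanish[where Na=Na and Nb=Nb])
qed

lemma hasd_power:
  assumes "hasd F F' x"
  shows "hasd (\<lambda>s. F s ^ n) (of_nat n * F x ^ (n - 1) * F') x"
proof (induction n)
  case 0 thus ?case using hasd_const[of 1 x] by simp
next
  case (Suc n)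
  have "hasd (\<lambda>s. F s * F s ^ n) (F' * F x ^ n + F x * (of_nat n * F x ^ (n - 1) * F')) x"
    by (rule hasd_mult[OF assms Suc])
  moreover have "F' * F x ^ n + F x * (of_nat n * F x ^ (n - 1) * F') = of_nat (Suc n) * F x ^ (Suc n - 1) * F'"
    by (cases n) (simp_all add: algebra_simps)
  ultimately show ?case by simp
qed

lemma hasd_deriv:
  assumes "hasd F F' x"
  shows "hasd (\<lambda>s. fls_deriv (F s)) (fls_deriv F') x"
proof -
  obtain N where N: "\<forall>s k. k < N \<longrightarrow> F s $$ k = 0" using assms unfolding hasd_def by auto
  show ?thesis using assms N unfolding hasd_def
    by (auto intro!: exI[of _ "N - 1"] derivative_eq_intros)
qed

lemma hasd_cmult:
  assumes "hasd F F' x"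
  shows "hasd (\<lambda>s. c * F s) (c * F') x"
  using hasd_mult[OF hasd_const assms, of c] by simp

lemma hasd_nth: "hasd F F' x \<Longrightarrow> ((\<lambda>s. F s $$ k) has_field_derivative F' $$ k) (at x)"
  unfolding hasd_def by auto

lemma core:
  fixes c :: "complex fls" and q :: int
  assumes Dres: "\<And>a. (c * fls_deriv a) $$ q = 0"
    and hl: "hasd l dl x" and hm: "hasd mu dm x"
    and br: "c * fls_deriv (l x) * dm - c * fls_deriv (mu x) * dl = c * fls_deriv eta"
  shows "((\<lambda>s. (mu s * l s ^ i * (c * fls_deriv (l s))) $$ q) has_field_derivative
           (l x ^ i * (c * fls_deriv eta)) $$ q) (at x)"
proof -
  have h1: "hasd (\<lambda>s. c * fls_deriv (l s)) (c * fls_deriv dl) x"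
    by (rule hasd_cmult[OF hasd_deriv[OF hl]])
  have h2: "hasd (\<lambda>s. mu s * l s ^ i) (dm * l x ^ i + mu x * (of_nat i * l x ^ (i - 1) * dl)) x"
    by (rule hasd_mult[OF hm hasd_power[OF hl]])
  note h3 = hasd_mult[OF h2 h1]
  let ?P = "(dm * l x ^ i + mu x * (of_nat i * l x ^ (i - 1) * dl)) * (c * fls_deriv (l x)) +
         mu x * l x ^ i * (c * fls_deriv dl)"
  have d1: "fls_deriv (mu x * l x ^ i * dl) = fls_deriv (mu x) * l x ^ i * dl + mu x * fls_deriv (l x ^ i) * dl + mu x * l x ^ i * fls_deriv dl"
    by (simp add: algebra_simps del: fls_deriv_power)
  have d2: "fls_deriv (l x ^ i) = of_nat i * l x ^ (i - 1) * fls_deriv (l x)" by (rule fls_deriv_power)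
  have "?P = l x ^ i * (c * fls_deriv (l x) * dm - c * fls_deriv (mu x) * dl) + c * fls_deriv (mu x * l x ^ i * dl)"
    unfolding d1 d2 by (simp add: algebra_simps)
  hence "?P = l x ^ i * (c * fls_deriv eta) + c * fls_deriv (mu x * l x ^ i * dl)"
    using br by simp
  hence "?P $$ q = (l x ^ i * (c * fls_deriv eta)) $$ q + (c * fls_deriv (mu x * l x ^ i * dl)) $$ q"
    by (simp only: fls_plus_nth)
  hence "?P $$ q = (l x ^ i * (c * fls_deriv eta)) $$ q" using Dres[of "mu x * l x ^ i * dl"] by (simp only: add_0_right)
  with hasd_nth[OF h3, of q] show ?thesis by simp
qed


definition bb :: "ser \<Rightarrow> bool" where "bb a \<longleftrightarrow> (\<exists>N. \<forall>k<N. a k = 0)"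
definition Eb :: "ser \<Rightarrow> complex fls" where "Eb a = Abs_fls a"
definition rf :: "ser \<Rightarrow> ser" where "rf a = (\<lambda>k. a (- k))"

lemma rf_rf[simp]: "rf (rf a) = a" by (simp add: rf_def)
lemma rf_apply: "rf a k = a (- k)" by (simp add: rf_def)

lemma Eb_nth: "bb a \<Longrightarrow> Eb a $$ k = a k"
  unfolding Eb_def bb_def by (rule nth_Abs_fls_ex_lower_bound)

lemma bb_fls[simp]: "bb (fls_nth x)"
  unfolding bb_def by (auto intro!: exI[of _ "fls_subdegree x"] simp: fls_eq0_below_subdegree)

lemma Eb_fls[simp]: "Eb (fls_nth x) = x"
  unfolding Eb_def by (rule fls.fls_nth_inverse)

lemma fls_Eb: "bb a \<Longrightarrow> fls_nth (Eb a) = a"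
  by (rule ext) (simp add: Eb_nth)

lemma sone_fls: "sone = fls_nth 1"
  by (rule ext) (simp add: sone_def)

lemma lmul_Eb:
  assumes "bb a" "bb b"
  shows "lmul a b = fls_nth (Eb a * Eb b)"
proof (rule ext)
  fix k
  obtain Na where Na: "\<forall>k<Na. a k = 0" using assms(1) unfolding bb_def by auto
  obtain Nb where Nb: "\<forall>k<Nb. b k = 0" using assms(2) unfolding bb_def by auto
  have "lmul a b k = infsum (\<lambda>j. a j * b (k - j)) {Na..k-Nb}"
    unfolding lmul_def
    by (rule infsum_cong_neutral) (use Na Nb in auto)
  also have "\<dots> = (\<Sum>j\<in>{Na..k-Nb}. a j * b (k - j))" by (rule infsum_finite) simp
  also have "\<dots> = (Eb a * Eb b) $$ k"
    by (subst fls_times_nth_bounds[where Na=Na and Nb=Nb]) (use Na Nb assms in \<open>auto simp: Eb_nth\<close>)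
  finally show "lmul a b k = (Eb a * Eb b) $$ k" .
qed

lemma spow_Eb: "bb a \<Longrightarrow> spow a n = fls_nth (Eb a ^ n)"
  by (induction n) (simp_all add: sone_fls lmul_Eb)

lemma sinv_down_Eb:
  assumes "bb a" "Eb a \<noteq> 0"
  shows "sinv_down a = fls_nth (inverse (Eb a))"
  unfolding sinv_down_def
proof (rule the_equality)
  show "(\<exists>N. \<forall>k<N. fls_nth (inverse (Eb a)) k = 0) \<and> lmul (fls_nth (inverse (Eb a))) a = sone"
    using assms bb_fls[of "inverse (Eb a)"] by (simp add: bb_def lmul_Eb sone_fls)
next
  fix b assume b: "(\<exists>N. \<forall>k<N. b k = 0) \<and> lmul b a = sone"
  hence bbb: "bb b" by (simp add: bb_def)
  hence "fls_nth (Eb b * Eb a) = fls_nth 1" using b assms by (simp add: lmul_Eb sone_fls)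
  hence "Eb b * Eb a = 1" by (metis Eb_fls)
  hence "Eb b = inverse (Eb a)" using assms(2) by (metis inverse_unique mult.commute)
  thus "b = fls_nth (inverse (Eb a))" using fls_Eb[OF bbb] by metis
qed

lemma lmul_rf: "lmul a b = rf (lmul (rf a) (rf b))"
proof (rule ext)
  fix k
  have "lmul (rf a) (rf b) (- k) = infsum (\<lambda>j. (\<lambda>j. a j * b (k - j)) (- j)) UNIV"
    unfolding lmul_def rf_def by (simp add: add.commute)
  also have "\<dots> = infsum (\<lambda>j. a j * b (k - j)) UNIV"
    by (rule infsum_reindex_bij_betw) (auto simp: bij_betw_def inj_def image_def intro!: exI[of _ "- x" for x])
  finally show "lmul a b k = rf (lmul (rf a) (rf b)) k" by (simp add: rf_def lmul_def)
qed

lemma rf_sone[simp]: "rf sone = sone" by (auto simp: rf_def sone_def)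

lemma rf_one[simp]: "rf (fls_nth 1) = fls_nth 1" using rf_sone by (simp add: sone_fls)

lemma spow_rf: "spow a n = rf (spow (rf a) n)"
  by (induction n) (simp_all, subst lmul_rf, simp)

lemma sinv_up_rf:
  assumes "bb (rf a)" "Eb (rf a) \<noteq> 0"
  shows "sinv_up a = rf (fls_nth (inverse (Eb (rf a))))"
  unfolding sinv_up_def
proof (rule the_equality)
  let ?b = "rf (fls_nth (inverse (Eb (rf a))))"
  have "\<forall>k > - fls_subdegree (inverse (Eb (rf a))). ?b k = 0"
    by (auto simp: rf_def fls_eq0_below_subdegree)
  moreover have "lmul ?b a = sone"
    by (subst lmul_rf) (use assms in \<open>simp add: lmul_Eb sone_fls\<close>)
  ultimately show "(\<exists>N. \<forall>k>N. ?b k = 0) \<and> lmul ?b a = sone" by blast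
next
  fix b assume b: "(\<exists>N. \<forall>k>N. b k = 0) \<and> lmul b a = sone"
  then obtain N where "\<forall>k>N. b k = 0" by auto
  hence bbb: "bb (rf b)" unfolding bb_def rf_def by (auto intro!: exI[of _ "- N"])
  have "lmul (rf b) (rf a) = sone" using b lmul_rf[of b a] by (metis rf_rf rf_sone)
  hence "fls_nth (Eb (rf b) * Eb (rf a)) = fls_nth 1" using bbb assms by (simp add: lmul_Eb sone_fls)
  hence "Eb (rf b) * Eb (rf a) = 1" by (metis Eb_fls)
  hence "Eb (rf b) = inverse (Eb (rf a))" using assms(2) by (metis inverse_unique mult.commute)
  hence "rf b = fls_nth (inverse (Eb (rf a)))" using fls_Eb[OF bbb] by metis
  thus "b = rf (fls_nth (inverse (Eb (rf a))))" by (metis rf_rf)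
qed

lemma bb_dp: "bb a \<Longrightarrow> bb (dp a)"
proof -
  assume "bb a" then obtain N where N: "\<forall>k<N. a k = 0" unfolding bb_def by auto
  hence "\<forall>k<N - 1. dp a k = 0" by (simp add: dp_def)
  thus ?thesis unfolding bb_def by blast
qed

lemma Eb_dp: assumes "bb a" shows "Eb (dp a) = fls_deriv (Eb a)"
proof (rule fls_eqI)
  fix k
  have "Eb (dp a) $$ k = dp a k" by (rule Eb_nth[OF bb_dp[OF assms]])
  thus "Eb (dp a) $$ k = fls_deriv (Eb a) $$ k" by (simp add: dp_def Eb_nth[OF assms])
qed

lemma X2_nth: "(fls_X ^ 2 * F) $$ k = F $$ (k - 2)"
  by (simp add: fls_X_power_times_conv_shift(1))

lemma bb_rf_dp: "bb (rf a) \<Longrightarrow> bb (rf (dp a))"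
proof -
  assume "bb (rf a)" then obtain N where N: "\<forall>k<N. a (- k) = 0" unfolding bb_def rf_def by auto
  have "\<forall>k<N + 1. rf (dp a) k = 0"
  proof (intro allI impI)
    fix k :: int assume "k < N + 1"
    hence "a (- (k - 1)) = 0" using N[rule_format, of "k - 1"] by simp
    thus "rf (dp a) k = 0" by (simp add: dp_def rf_def)
  qed
  thus ?thesis unfolding bb_def by blast
qed

lemma Eb_rf_dp: assumes "bb (rf a)" shows "Eb (rf (dp a)) = - (fls_X ^ 2 * fls_deriv (Eb (rf a)))"
proof (rule fls_eqI)
  fix k
  have "Eb (rf (dp a)) $$ k = rf (dp a) k" by (rule Eb_nth[OF bb_rf_dp[OF assms]])
  thus "Eb (rf (dp a)) $$ k = (- (fls_X ^ 2 * fls_deriv (Eb (rf a)))) $$ k"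
    by (simp only: fls_uminus_nth X2_nth fls_deriv_nth Eb_nth[OF assms]) (simp add: dp_def rf_apply algebra_simps)
qed

lemma res_pow: "(l ^ j * fls_deriv l) $$ (-1) = (0::complex)"
proof -
  have "fls_deriv (l ^ Suc j) $$ (-1) = 0" by (rule fls_deriv_residue)
  hence "(of_nat (Suc j) * (l ^ j * fls_deriv l)) $$ (-1) = 0"
    by (simp only: fls_deriv_power) (simp add: algebra_simps)
  thus ?thesis by (simp only: fls_mult_of_nat_nth mult_eq_0_iff of_nat_eq_0_iff) simp
qed

lemma res_invpow:
  assumes "j \<ge> 2"
  shows "(inverse l ^ j * fls_deriv l) $$ (-1) = (0::complex)"
proof -
  obtain k where k: "j = Suc (Suc k)" using assms by (metis add_2_eq_Suc le_Suc_ex)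
  have d0: "fls_deriv (inverse l ^ Suc k) $$ (-1) = 0" by (rule fls_deriv_residue)
  have e: "fls_deriv (inverse l ^ Suc k) = - (of_nat (Suc k) * (inverse l ^ j * fls_deriv l))"
    by (simp only: fls_deriv_power fls_inverse_deriv k) (simp add: algebra_simps power2_eq_square)
  from d0[unfolded e] show ?thesis
    by (simp only: fls_uminus_nth neg_equal_0_iff_equal fls_mult_of_nat_nth mult_eq_0_iff of_nat_eq_0_iff) simp
qed

lemma res_inv1: "(inverse l * fls_deriv l) $$ (-1) = (of_int (fls_subdegree l) :: complex)"
  using fls_residue_deriv_times_inverse_eq_subdegree(2)[of l] by simp

lemma invpow_pow:
  fixes l :: "complex fls"
  assumes "l \<noteq> 0"
  shows "inverse l ^ a * l ^ b = (if a \<le> b then l ^ (b - a) else inverse l ^ (a - b))"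
proof (cases "a \<le> b")
  case True
  then obtain d where "b = a + d" using le_Suc_ex by blast
  thus ?thesis using assms by (simp add: power_add power_inverse field_simps)
next
  case False
  then obtain d where "a = b + d" using le_Suc_ex by (metis nat_le_linear)
  thus ?thesis using assms False by (simp add: power_add power_inverse field_simps)
qed


definition cA :: "complex fls" where "cA = - (fls_X ^ 2)"

lemma cA_nth: "(G * (cA * F)) $$ 1 = - ((G * F) $$ (-1))"
proof -
  have "G * (cA * F) = - (fls_X ^ 2 * (G * F))" by (simp add: cA_def algebra_simps)
  thus ?thesis by (simp only: fls_uminus_nth X2_nth) simp
qed

lemma cA_res: "(cA * fls_deriv a) $$ 1 = 0"
  using cA_nth[of 1 "fls_deriv a"] by (simp add: fls_deriv_residue)

lemma resB:
  fixes l :: "complex fls"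
  assumes "l \<noteq> 0"
  shows "(inverse l ^ b * l ^ a * fls_deriv l) $$ (-1) = (if b = a + 1 then of_int (fls_subdegree l) else 0)"
proof (cases "b \<le> a")
  case True
  hence "inverse l ^ b * l ^ a = l ^ (a - b)" using invpow_pow[OF assms] by simp
  thus ?thesis using True res_pow[of l "a - b"] by simp
next
  case False
  hence e: "inverse l ^ b * l ^ a = inverse l ^ (b - a)" using invpow_pow[OF assms] by simp
  show ?thesis
  proof (cases "b = a + 1")
    case True
    have h: "inverse l ^ b * l ^ a * fls_deriv l = inverse l * fls_deriv l" unfolding e using True by simp
    show ?thesis unfolding h by (subst if_P[OF True]) (rule res_inv1)
  next
    case F2: False
    hence "b - a \<ge> 2" using False by auto
    thus ?thesis using e res_invpow[of "b - a" l] F2 by simp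
  qed
qed

lemma resA:
  fixes l :: "complex fls"
  assumes "l \<noteq> 0"
  shows "(inverse l ^ b * l ^ a * (cA * fls_deriv l)) $$ 1 = (if b = a + 1 then - of_int (fls_subdegree l) else 0)"
  using cA_nth[of "inverse l ^ b * l ^ a" "fls_deriv l"] resB[OF assms, of b a] by simp

lemma resA0: "(l ^ a * (cA * fls_deriv l)) $$ 1 = 0"
  using cA_nth[of "l ^ a" "fls_deriv l"] res_pow[of l a] by simp

lemma deriv_zero_fun:
  assumes "((\<lambda>s. F s) has_field_derivative d) (at x)" "\<And>s. F s = (0::complex)"
  shows "d = 0"
proof -
  have "F = (\<lambda>s. 0)" using assms(2) by auto
  thus ?thesis using assms(1) DERIV_const DERIV_unique by metis
qed

lemma pdt_zero:
  assumes "\<And>s. B (t(mn := s)) k = 0"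
  shows "pdt mn B t k = 0"
  unfolding pdt_def using assms by simp

lemma bb_rf_bound: "(\<And>k. k > N \<Longrightarrow> a k = 0) \<Longrightarrow> bb (rf a)"
  unfolding bb_def rf_def by (auto intro!: exI[of _ "- N"])

lemma pbr_A:
  assumes "bb (rf (A t))" "bb (rf (B t))" "bb (rf (pdt (1,0) A t))" "bb (rf (pdt (1,0) B t))"
  shows "Eb (rf (pbr A B t)) = cA * fls_deriv (Eb (rf (A t))) * Eb (rf (pdt (1,0) B t))
            - Eb (rf (pdt (1,0) A t)) * (cA * fls_deriv (Eb (rf (B t))))"
proof -
  have "rf (pbr A B t) = fls_nth (Eb (rf (dp (A t))) * Eb (rf (pdt (1,0) B t))
            - Eb (rf (pdt (1,0) A t)) * Eb (rf (dp (B t))))"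
  proof -
    have e1: "lmul (dp (A t)) (pdt (1,0) B t) = rf (fls_nth (Eb (rf (dp (A t))) * Eb (rf (pdt (1,0) B t))))"
      by (subst lmul_rf) (simp only: lmul_Eb[OF bb_rf_dp[OF assms(1)] assms(4)])
    have e2: "lmul (pdt (1,0) A t) (dp (B t)) = rf (fls_nth (Eb (rf (pdt (1,0) A t)) * Eb (rf (dp (B t)))))"
      by (subst lmul_rf) (simp only: lmul_Eb[OF assms(3) bb_rf_dp[OF assms(2)]])
    show ?thesis unfolding pbr_def e1 e2 by (rule ext) (simp add: rf_def)
  qed
  hence "Eb (rf (pbr A B t)) = Eb (rf (dp (A t))) * Eb (rf (pdt (1,0) B t))
            - Eb (rf (pdt (1,0) A t)) * Eb (rf (dp (B t)))" by (metis Eb_fls)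
  thus ?thesis using Eb_rf_dp assms by (simp add: cA_def)
qed

lemma pbr_B:
  assumes "bb (A t)" "bb (B t)" "bb (pdt (1,0) A t)" "bb (pdt (1,0) B t)"
  shows "Eb (pbr A B t) = fls_deriv (Eb (A t)) * Eb (pdt (1,0) B t)
            - Eb (pdt (1,0) A t) * fls_deriv (Eb (B t))"
proof -
  have "pbr A B t = fls_nth (Eb (dp (A t)) * Eb (pdt (1,0) B t)
            - Eb (pdt (1,0) A t) * Eb (dp (B t)))"
  proof -
    have e1: "lmul (dp (A t)) (pdt (1,0) B t) = fls_nth (Eb (dp (A t)) * Eb (pdt (1,0) B t))"
      by (rule lmul_Eb[OF bb_dp[OF assms(1)] assms(4)])
    have e2: "lmul (pdt (1,0) A t) (dp (B t)) = fls_nth (Eb (pdt (1,0) A t) * Eb (dp (B t)))"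
      by (rule lmul_Eb[OF assms(3) bb_dp[OF assms(2)]])
    show ?thesis unfolding pbr_def e1 e2 by (rule ext) simp
  qed
  hence "Eb (pbr A B t) = Eb (dp (A t)) * Eb (pdt (1,0) B t)
            - Eb (pdt (1,0) A t) * Eb (dp (B t))" by (metis Eb_fls)
  thus ?thesis using Eb_dp assms by simp
qed


lemma S3_trunc:
  fixes X :: "complex fls"
  assumes van: "\<And>j k. k < int j \<Longrightarrow> (X ^ j) $$ k = 0" and q: "q \<le> int I + 1"
  shows "infsum (\<lambda>i. c i * (X ^ (i + 1)) $$ q) {1..} = (\<Sum>i\<in>{1..I}. c i * (X ^ (i + 1)) $$ q)"
proof -
  have "infsum (\<lambda>i. c i * (X ^ (i + 1)) $$ q) {1..} = infsum (\<lambda>i. c i * (X ^ (i + 1)) $$ q) {1..I}"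
  proof (rule infsum_cong_neutral)
    fix i assume "i \<in> {1..} - {1..I}"
    hence "q < int (i + 1)" using q by auto
    hence h: "(X ^ (i + 1)) $$ q = 0" by (rule van)
    show "c i * (X ^ (i + 1)) $$ q = 0" by (simp only: h mult_zero_right)
  qed auto
  thus ?thesis by simp
qed

definition ellA :: "(int \<Rightarrow> tm \<Rightarrow> complex) \<Rightarrow> tm \<Rightarrow> complex fls" where
  "ellA f t = Eb (rf (Lop f t))"

lemma LA_bb: "bb (rf (Lop f t))"
  by (rule bb_rf_bound[of 1]) (simp add: Lop_def)

lemma LA_nth: "ellA f t $$ k = Lop f t (- k)"
  unfolding ellA_def by (simp add: Eb_nth[OF LA_bb] rf_apply)

lemma LA_sub: "fls_subdegree (ellA f t) = -1"
  by (rule fls_subdegree_eqI) (auto simp: LA_nth Lop_def)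

lemma LA_nz: "ellA f t \<noteq> 0"
  by (rule fls_nonzeroI[of _ "-1"]) (simp add: LA_nth Lop_def)

lemma LA_pow_van: "k < - int j \<Longrightarrow> (ellA f t ^ j) $$ k = 0"
  by (rule fls_eq0_below_subdegree) (simp add: fls_subdegree_pow LA_sub)

lemma LA_invpow_van: "k < int j \<Longrightarrow> (inverse (ellA f t) ^ j) $$ k = 0"
  by (rule fls_eq0_below_subdegree) (simp add: fls_subdegree_pow LA_sub)

lemma spowLA: "spow (Lop f t) j k = (ellA f t ^ j) $$ (- k)"
  by (subst spow_rf) (simp add: spow_Eb[OF LA_bb] rf_apply ellA_def)

lemma sinvLA: "spow (sinv_up (Lop f t)) j k = (inverse (ellA f t) ^ j) $$ (- k)"
proof -
  have "sinv_up (Lop f t) = rf (fls_nth (inverse (ellA f t)))"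
    unfolding ellA_def by (rule sinv_up_rf[OF LA_bb]) (use LA_nz in \<open>simp add: ellA_def\<close>)
  thus ?thesis by (subst spow_rf) (simp add: spow_Eb rf_apply)
qed

lemma DA_van: "k < 0 \<Longrightarrow> (cA * fls_deriv (ellA f t)) $$ k = 0"
proof -
  assume k: "k < 0"
  have "cA * fls_deriv (ellA f t) = - (fls_X ^ 2 * fls_deriv (ellA f t))" by (simp add: cA_def)
  hence "(cA * fls_deriv (ellA f t)) $$ k = - (of_int (k - 1) * ellA f t $$ (k - 1))"
    by (simp only: fls_uminus_nth X2_nth fls_deriv_nth) simp
  also have "ellA f t $$ (k - 1) = 0" using k by (simp add: LA_nth Lop_def)
  finally show ?thesis by simp
qed

definition suppt :: "tm \<Rightarrow> (nat \<times> nat) set" where "suppt t = {x. t x \<noteq> 0}"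

lemma MA_coef:
  assumes "fin_times t"
  shows "Mop (Lop f) v t k =
    (\<Sum>x\<in>{x\<in>suppt t. 2 \<le> fst x + snd x}. of_nat (fst x) * t x * (ellA f t ^ (fst x - 1)) $$ (- k))
    + (if k = 0 then t (1,0) else 0)
    + infsum (\<lambda>i. v (i + 1) t * (inverse (ellA f t) ^ (i + 1)) $$ (- k)) {1..}"
proof -
  let ?F = "{x\<in>suppt t. 2 \<le> fst x + snd x}"
  have fin: "finite ?F" using assms unfolding fin_times_def suppt_def by auto
  have "infsum (\<lambda>(m,n). of_nat m * t (m,n) * spow (Lop f t) (m - 1) k) {(m,n). m + n \<ge> 2}
      = infsum (\<lambda>x. of_nat (fst x) * t x * (ellA f t ^ (fst x - 1)) $$ (- k)) ?F"
    by (rule infsum_cong_neutral) (auto simp: spowLA suppt_def)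
  also have "\<dots> = (\<Sum>x\<in>?F. of_nat (fst x) * t x * (ellA f t ^ (fst x - 1)) $$ (- k))"
    using fin by simp
  finally have A: "infsum (\<lambda>(m,n). of_nat m * t (m,n) * spow (Lop f t) (m - 1) k) {(m,n). m + n \<ge> 2}
      = (\<Sum>x\<in>?F. of_nat (fst x) * t x * (ellA f t ^ (fst x - 1)) $$ (- k))" .
  show ?thesis unfolding Mop_def sinvLA A by simp
qed

lemma MA_bound:
  assumes "fin_times t" "suppt t \<subseteq> S" "finite S" "k > (\<Sum>x\<in>S. int (fst x))"
  shows "Mop (Lop f) v t k = 0"
proof -
  let ?K = "\<Sum>x\<in>S. int (fst x)"
  have K0: "?K \<ge> 0" by (simp add: sum_nonneg)
  have "(\<Sum>x\<in>{x\<in>suppt t. 2 \<le> fst x + snd x}. of_nat (fst x) * t x * (ellA f t ^ (fst x - 1)) $$ (- k)) = 0"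
  proof (rule sum.neutral, rule ballI)
    fix x assume "x \<in> {x\<in>suppt t. 2 \<le> fst x + snd x}"
    hence "x \<in> S" using assms(2) by auto
    hence "int (fst x) \<le> ?K" using assms(3) by (intro member_le_sum) auto
    hence "- k < - int (fst x - 1)" using assms(4) by linarith
    thus "of_nat (fst x) * t x * (ellA f t ^ (fst x - 1)) $$ (- k) = 0" by (simp add: LA_pow_van)
  qed
  moreover have "infsum (\<lambda>i. v (i + 1) t * (inverse (ellA f t) ^ (i + 1)) $$ (- k)) {1..} = 0"
    using S3_trunc[of "inverse (ellA f t)" "- k" 0 "\<lambda>i. v (i + 1) t"] LA_invpow_van assms(4) K0 by simp
  ultimately show ?thesis using MA_coef[OF assms(1)] assms(4) K0 by simp
qed

lemma MA_bb: "fin_times t \<Longrightarrow> bb (rf (Mop (Lop f) v t))"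
  by (rule bb_rf_bound[of "\<Sum>x\<in>suppt t. int (fst x)"], rule MA_bound)
     (auto simp: fin_times_def suppt_def)


lemma vA:
  assumes fin: "fin_times t" and i: "i \<ge> 1"
  shows "v (i + 1) t = (Eb (rf (Mop (Lop f) v t)) * ellA f t ^ i * (cA * fls_deriv (ellA f t))) $$ 1"
proof -
  let ?l = "ellA f t"
  let ?mu = "Eb (rf (Mop (Lop f) v t))"
  let ?D = "cA * fls_deriv ?l"
  let ?W = "?l ^ i * ?D"
  let ?F = "{x\<in>suppt t. 2 \<le> fst x + snd x}"
  define muT where "muT = (\<Sum>x\<in>?F. fls_const (of_nat (fst x) * t x) * ?l ^ (fst x - 1))
     + fls_const (t (1,0)) + (\<Sum>j\<in>{1..i}. fls_const (v (j + 1) t) * inverse ?l ^ (j + 1))"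
  have Wv: "?W $$ k = 0" if "k < - int i" for k
    by (rule fls_times_vanish[where Na="- int i" and Nb=0]) (use that in \<open>auto simp: LA_pow_van DA_van\<close>)
  have agree: "?mu $$ j = muT $$ j" if "j \<le> 1 - (- int i)" for j
  proof -
    have "?mu $$ j = Mop (Lop f) v t (- j)"
      by (simp add: Eb_nth[OF MA_bb[OF fin]] rf_apply)
    also have "\<dots> = (\<Sum>x\<in>?F. of_nat (fst x) * t x * (?l ^ (fst x - 1)) $$ j)
      + (if j = 0 then t (1,0) else 0)
      + (\<Sum>k\<in>{1..i}. v (k + 1) t * (inverse ?l ^ (k + 1)) $$ j)"
      using MA_coef[OF fin, of f v "- j"]
        S3_trunc[of "inverse ?l" j i "\<lambda>k. v (k + 1) t"] LA_invpow_van that by simp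
    also have "\<dots> = muT $$ j"
      unfolding muT_def by (simp add: fls_nth_sum fls_mult_const_nth)
    finally show ?thesis .
  qed
  have "(?mu * ?l ^ i * ?D) $$ 1 = (?mu * ?W) $$ 1" by (simp add: mult.assoc)
  also have "\<dots> = (muT * ?W) $$ 1"
    by (rule fls_times_agree[where Nb="- int i"]) (use agree Wv in auto)
  also have "muT * ?W = (\<Sum>x\<in>?F. fls_const (of_nat (fst x) * t x) * (?l ^ (fst x - 1 + i) * ?D))
     + fls_const (t (1,0)) * ?W + (\<Sum>j\<in>{1..i}. fls_const (v (j + 1) t) * (inverse ?l ^ (j + 1) * ?l ^ i * ?D))"
    unfolding muT_def distrib_right sum_distrib_right by (simp only: power_add mult.assoc)
  also have "\<dots> $$ 1 = (\<Sum>j\<in>{1..i}. v (j + 1) t * (if j + 1 = i + 1 then 1 else 0))"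
  proof -
    have t1: "(fls_const c * (?l ^ a * ?D)) $$ 1 = 0" for c a
      by (simp only: fls_mult_const_nth resA0 mult_zero_right)
    have t3: "(fls_const (v (j + 1) t) * (inverse ?l ^ (j + 1) * ?l ^ i * ?D)) $$ 1
       = v (j + 1) t * (if j + 1 = i + 1 then 1 else 0)" for j
      by (simp only: fls_mult_const_nth resA[OF LA_nz] LA_sub) simp
    show ?thesis by (simp only: fls_plus_nth fls_nth_sum t1 t3) simp
  qed
  also have "\<dots> = (\<Sum>j\<in>{1..i}. if j = i then v (j + 1) t else 0)"
    by (rule sum.cong) auto
  also have "\<dots> = v (i + 1) t" using i by (simp add: sum.delta)
  finally show ?thesis by simp
qed


lemma fin_upd: "fin_times t \<Longrightarrow> fin_times (t(x := s))"
  unfolding fin_times_def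
  by (rule finite_subset[of _ "{x. t x \<noteq> 0} \<union> {x}"]) auto

lemma suppt_upd: "suppt (t(x := s)) \<subseteq> suppt t \<union> {x}"
  unfolding suppt_def by auto

lemma fin_suppt: "fin_times t \<Longrightarrow> finite (suppt t)"
  unfolding fin_times_def suppt_def by simp

lemma hasd_lax_A:
  assumes lax: "lax_eq L Lh K" and fin: "fin_times t" and mn: "m + n \<ge> 1"
    and bnd: "\<And>s k. k > N \<Longrightarrow> K (t((m,n) := s)) k = 0"
  shows "hasd (\<lambda>s. Eb (rf (K (t((m,n) := s))))) (Eb (rf (pbr (Hop L Lh m n) K t))) (t (m,n))"
    and "bb (rf (pbr (Hop L Lh m n) K t))"
proof -
  have d: "((\<lambda>s. K (t((m,n) := s)) k) has_field_derivative pbr (Hop L Lh m n) K t k) (at (t (m,n)))" for k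
    using lax fin mn unfolding lax_eq_def by blast
  have z: "pbr (Hop L Lh m n) K t k = 0" if "k > N" for k
    by (rule deriv_zero_fun[OF d]) (use bnd that in auto)
  show bbp: "bb (rf (pbr (Hop L Lh m n) K t))" by (rule bb_rf_bound[of N]) (use z in auto)
  have bbs: "bb (rf (K (t((m,n) := s))))" for s by (rule bb_rf_bound[of N]) (use bnd in auto)
  show "hasd (\<lambda>s. Eb (rf (K (t((m,n) := s))))) (Eb (rf (pbr (Hop L Lh m n) K t))) (t (m,n))"
    unfolding hasd_def
  proof (intro conjI allI)
    show "\<exists>Na. \<forall>s k. k < Na \<longrightarrow> Eb (rf (K (t((m, n) := s)))) $$ k = 0"
      by (rule exI[of _ "- N"]) (auto simp: Eb_nth[OF bbs] rf_apply bnd)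
    fix k
    show "((\<lambda>s. Eb (rf (K (t((m, n) := s)))) $$ k) has_field_derivative
          Eb (rf (pbr (Hop L Lh m n) K t)) $$ k) (at (t (m, n)))"
      by (simp add: Eb_nth[OF bbs] Eb_nth[OF bbp] rf_apply d)
  qed
qed

lemma H_boundA: "k > int m \<Longrightarrow> Hop (Lop f) Lh m n t k = 0"
  unfolding Hop_def spos_def snonpos_def by (simp add: spowLA LA_pow_van)

lemma MA_line:
  assumes "fin_times t" "k > (\<Sum>x\<in>suppt t \<union> {y}. int (fst x))"
  shows "Mop (Lop f) v (t(y := s)) k = 0"
  by (rule MA_bound[OF fin_upd[OF assms(1)] suppt_upd])
     (use assms fin_suppt in auto)

lemma mainA:
  assumes laxL: "lax_eq (Lop f) Lh (Lop f)" and laxM: "lax_eq (Lop f) Lh (Mop (Lop f) v)"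
    and canL: "\<And>t. fin_times t \<Longrightarrow> pbr (Lop f) (Mop (Lop f) v) t = sone"
    and fin: "fin_times t" and i: "i \<ge> 1" and mn: "m + n \<ge> 1"
  shows "((\<lambda>s. v (i + 1) (t((m,n) := s))) has_field_derivative
          sres (lmul (spow (Lop f t) i) (dp (Hop (Lop f) Lh m n t)))) (at (t (m,n)))"
proof -
  let ?H = "Hop (Lop f) Lh m n"
  let ?L = "Lop f"
  let ?M = "Mop (Lop f) v"
  let ?T = "\<lambda>s. t((m,n) := s)"
  let ?x = "t (m,n)"
  define l where "l = Eb (rf (?L t))"
  define mu where "mu = Eb (rf (?M t))"
  define eta where "eta = Eb (rf (?H t))"
  define dl where "dl = Eb (rf (pbr ?H ?L t))"
  define dm where "dm = Eb (rf (pbr ?H ?M t))"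
  have hl: "hasd (\<lambda>s. Eb (rf (?L (?T s)))) dl ?x"
    unfolding dl_def by (rule hasd_lax_A(1)[OF laxL fin mn, of 1]) (simp add: Lop_def)
  have hm: "hasd (\<lambda>s. Eb (rf (?M (?T s)))) dm ?x"
    unfolding dm_def by (rule hasd_lax_A(1)[OF laxM fin mn], rule MA_line[OF fin], assumption)
  have bH: "bb (rf (?H t'))" for t' by (rule bb_rf_bound[of m]) (simp add: H_boundA)
  have bL: "bb (rf (?L t'))" for t' by (rule LA_bb)
  have bM: "bb (rf (?M t))" by (rule MA_bb[OF fin])
  have bdH: "bb (rf (pdt (1,0) ?H t))" by (rule bb_rf_bound[of m]) (simp add: pdt_zero H_boundA)
  have bdL: "bb (rf (pdt (1,0) ?L t))" by (rule bb_rf_bound[of 1]) (simp add: pdt_zero Lop_def)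
  have bdM: "bb (rf (pdt (1,0) ?M t))"
    by (rule bb_rf_bound[of "\<Sum>x\<in>suppt t \<union> {(1,0)}. int (fst x)"], rule pdt_zero, rule MA_line[OF fin])
  have e1: "dl = cA * fls_deriv eta * Eb (rf (pdt (1,0) ?L t)) - Eb (rf (pdt (1,0) ?H t)) * (cA * fls_deriv l)"
    unfolding dl_def eta_def l_def by (rule pbr_A[OF bH bL bdH bdL])
  have e2: "dm = cA * fls_deriv eta * Eb (rf (pdt (1,0) ?M t)) - Eb (rf (pdt (1,0) ?H t)) * (cA * fls_deriv mu)"
    unfolding dm_def eta_def mu_def by (rule pbr_A[OF bH bM bdH bdM])
  have e3: "1 = cA * fls_deriv l * Eb (rf (pdt (1,0) ?M t)) - Eb (rf (pdt (1,0) ?L t)) * (cA * fls_deriv mu)"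
  proof -
    have "Eb (rf (pbr ?L ?M t)) = 1" using canL[OF fin] by (simp add: sone_fls)
    thus ?thesis unfolding l_def mu_def using pbr_A[OF bL bM bdL bdM] by simp
  qed
  have br: "cA * fls_deriv l * dm - cA * fls_deriv mu * dl = cA * fls_deriv eta"
  proof -
    have "cA * fls_deriv l * dm - cA * fls_deriv mu * dl = cA * fls_deriv eta *
      (cA * fls_deriv l * Eb (rf (pdt (1,0) ?M t)) - Eb (rf (pdt (1,0) ?L t)) * (cA * fls_deriv mu))"
      unfolding e1 e2 by (simp add: algebra_simps)
    thus ?thesis using e3 by simp
  qed
  have lx: "Eb (rf (?L (?T ?x))) = l" and mx: "Eb (rf (?M (?T ?x))) = mu"
    by (simp_all add: l_def mu_def)
  note c = core[OF cA_res hl hm, of eta i, unfolded lx mx, OF br]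
  have fn: "(\<lambda>s. (Eb (rf (?M (?T s))) * Eb (rf (?L (?T s))) ^ i * (cA * fls_deriv (Eb (rf (?L (?T s)))))) $$ 1)
      = (\<lambda>s. v (i + 1) (?T s))"
    by (rule ext, subst vA[OF fin_upd[OF fin] i, where f=f]) (simp add: ellA_def)
  have val: "sres (lmul (spow (?L t) i) (dp (?H t))) = (l ^ i * (cA * fls_deriv eta)) $$ 1"
  proof -
    have sp: "rf (spow (?L t) i) = fls_nth (l ^ i)"
      by (rule ext) (simp add: rf_apply spowLA l_def ellA_def)
    have bsp: "bb (rf (spow (?L t) i))" using sp by simp
    have "lmul (spow (?L t) i) (dp (?H t)) = rf (fls_nth (Eb (rf (spow (?L t) i)) * Eb (rf (dp (?H t)))))"
      by (subst lmul_rf) (simp only: lmul_Eb[OF bsp bb_rf_dp[OF bH]])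
    moreover have "Eb (rf (spow (?L t) i)) = l ^ i" using sp by simp
    moreover have "Eb (rf (dp (?H t))) = cA * fls_deriv eta"
      unfolding eta_def by (simp add: Eb_rf_dp[OF bH] cA_def)
    ultimately show ?thesis by (simp add: sres_def rf_apply)
  qed
  show ?thesis using c unfolding fn val .
qed


definition ellB :: "(tm \<Rightarrow> complex) \<Rightarrow> (int \<Rightarrow> tm \<Rightarrow> complex) \<Rightarrow> tm \<Rightarrow> complex fls" where
  "ellB u g t = Eb (Lhop u g t)"

lemma LB_bb: "bb (Lhop u g t)"
  unfolding bb_def by (rule exI[of _ "-1"]) (simp add: Lhop_def)

lemma LB_nth: "ellB u g t $$ k = Lhop u g t k"
  unfolding ellB_def by (simp add: Eb_nth[OF LB_bb])

lemma LB_sub: "u t \<noteq> 0 \<Longrightarrow> fls_subdegree (ellB u g t) = -1"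
  by (rule fls_subdegree_eqI) (auto simp: LB_nth Lhop_def)

lemma LB_nz: "u t \<noteq> 0 \<Longrightarrow> ellB u g t \<noteq> 0"
  by (rule fls_nonzeroI[of _ "-1"]) (simp add: LB_nth Lhop_def)

lemma LB_pow_van: "k < - int j \<Longrightarrow> (ellB u g t ^ j) $$ k = 0"
proof (induction j arbitrary: k)
  case 0 thus ?case by simp
next
  case (Suc j)
  show ?case
    by (simp only: power_Suc, rule fls_times_vanish[where Na="-1" and Nb="- int j"])
       (use Suc in \<open>auto simp: LB_nth Lhop_def\<close>)
qed

lemma LB_invpow_van: "u t \<noteq> 0 \<Longrightarrow> k < int j \<Longrightarrow> (inverse (ellB u g t) ^ j) $$ k = 0"
  by (rule fls_eq0_below_subdegree) (simp add: fls_subdegree_pow LB_sub)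

lemma spowLB: "spow (Lhop u g t) j k = (ellB u g t ^ j) $$ k"
  by (simp add: spow_Eb[OF LB_bb] ellB_def)

lemma sinvLB: "u t \<noteq> 0 \<Longrightarrow> spow (sinv_down (Lhop u g t)) j k = (inverse (ellB u g t) ^ j) $$ k"
proof -
  assume u: "u t \<noteq> 0"
  have "sinv_down (Lhop u g t) = fls_nth (inverse (ellB u g t))"
    unfolding ellB_def by (rule sinv_down_Eb[OF LB_bb]) (use LB_nz[where u=u and t=t, OF u] in \<open>simp add: ellB_def\<close>)
  thus ?thesis by (simp add: spow_Eb)
qed

lemma DB_van: "k < -2 \<Longrightarrow> fls_deriv (ellB u g t) $$ k = 0"
  by (simp only: fls_deriv_nth LB_nth) (simp add: Lhop_def)

lemma MB_coef:
  assumes "fin_times t" "u t \<noteq> 0"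
  shows "Mhop (Lhop u g) vh t k =
    (\<Sum>x\<in>{x\<in>suppt t. 2 \<le> fst x + snd x}. of_nat (snd x) * t x * (ellB u g t ^ (snd x - 1)) $$ k)
    + (if k = 0 then t (0,1) else 0)
    + infsum (\<lambda>i. vh (i + 1) t * (inverse (ellB u g t) ^ (i + 1)) $$ k) {1..}"
proof -
  let ?F = "{x\<in>suppt t. 2 \<le> fst x + snd x}"
  have fin: "finite ?F" using assms unfolding fin_times_def suppt_def by auto
  have "infsum (\<lambda>(m,n). of_nat n * t (m,n) * spow (Lhop u g t) (n - 1) k) {(m,n). m + n \<ge> 2}
      = infsum (\<lambda>x. of_nat (snd x) * t x * (ellB u g t ^ (snd x - 1)) $$ k) ?F"
    by (rule infsum_cong_neutral) (auto simp: spowLB suppt_def)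
  also have "\<dots> = (\<Sum>x\<in>?F. of_nat (snd x) * t x * (ellB u g t ^ (snd x - 1)) $$ k)"
    using fin by simp
  finally have A: "infsum (\<lambda>(m,n). of_nat n * t (m,n) * spow (Lhop u g t) (n - 1) k) {(m,n). m + n \<ge> 2}
      = (\<Sum>x\<in>?F. of_nat (snd x) * t x * (ellB u g t ^ (snd x - 1)) $$ k)" .
  show ?thesis unfolding Mhop_def sinvLB[where u=u and t=t, OF assms(2)] A by simp
qed

lemma MB_bound:
  assumes "fin_times t" "u t \<noteq> 0" "suppt t \<subseteq> S" "finite S" "k < - (\<Sum>x\<in>S. int (snd x))"
  shows "Mhop (Lhop u g) vh t k = 0"
proof -
  let ?K = "\<Sum>x\<in>S. int (snd x)"
  have K0: "?K \<ge> 0" by (simp add: sum_nonneg)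
  have "(\<Sum>x\<in>{x\<in>suppt t. 2 \<le> fst x + snd x}. of_nat (snd x) * t x * (ellB u g t ^ (snd x - 1)) $$ k) = 0"
  proof (rule sum.neutral, rule ballI)
    fix x assume "x \<in> {x\<in>suppt t. 2 \<le> fst x + snd x}"
    hence "x \<in> S" using assms(3) by auto
    hence "int (snd x) \<le> ?K" using assms(4) by (intro member_le_sum) auto
    hence "k < - int (snd x - 1)" using assms(5) by linarith
    thus "of_nat (snd x) * t x * (ellB u g t ^ (snd x - 1)) $$ k = 0" by (simp add: LB_pow_van)
  qed
  moreover have "infsum (\<lambda>i. vh (i + 1) t * (inverse (ellB u g t) ^ (i + 1)) $$ k) {1..} = 0"
    using S3_trunc[of "inverse (ellB u g t)" k 0 "\<lambda>i. vh (i + 1) t"] LB_invpow_van[where u=u and t=t, OF assms(2)] assms(5) K0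
    by simp
  ultimately show ?thesis using MB_coef[where u=u and t=t, OF assms(1,2)] assms(5) K0 by simp
qed

lemma MB_bb: "fin_times t \<Longrightarrow> u t \<noteq> 0 \<Longrightarrow> bb (Mhop (Lhop u g) vh t)"
  unfolding bb_def
  by (rule exI[of _ "- (\<Sum>x\<in>suppt t. int (snd x))"], intro allI impI, rule MB_bound)
     (auto simp: fin_times_def suppt_def)

lemma vB:
  assumes fin: "fin_times t" and u: "u t \<noteq> 0" and i: "i \<ge> 1"
  shows "vh (i + 1) t = - (Eb (Mhop (Lhop u g) vh t) * ellB u g t ^ i * fls_deriv (ellB u g t)) $$ (-1)"
proof -
  let ?l = "ellB u g t"
  let ?mu = "Eb (Mhop (Lhop u g) vh t)"
  let ?D = "fls_deriv ?l"
  let ?W = "?l ^ i * ?D"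
  let ?F = "{x\<in>suppt t. 2 \<le> fst x + snd x}"
  define muT where "muT = (\<Sum>x\<in>?F. fls_const (of_nat (snd x) * t x) * ?l ^ (snd x - 1))
     + fls_const (t (0,1)) + (\<Sum>j\<in>{1..i}. fls_const (vh (j + 1) t) * inverse ?l ^ (j + 1))"
  have Wv: "?W $$ k = 0" if "k < - int i - 2" for k
    apply (rule fls_times_vanish[where Na="- int i" and Nb="-2"])
      apply (erule LB_pow_van)
     apply (erule DB_van)
    using that by simp
  have agree: "?mu $$ j = muT $$ j" if "j \<le> -1 - (- int i - 2)" for j
  proof -
    have "?mu $$ j = Mhop (Lhop u g) vh t j"
      by (simp add: Eb_nth[OF MB_bb[where u=u and t=t, OF fin u]])
    also have "\<dots> = (\<Sum>x\<in>?F. of_nat (snd x) * t x * (?l ^ (snd x - 1)) $$ j)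
      + (if j = 0 then t (0,1) else 0)
      + (\<Sum>k\<in>{1..i}. vh (k + 1) t * (inverse ?l ^ (k + 1)) $$ j)"
      using MB_coef[where u=u and t=t and g=g and vh=vh and k=j, OF fin u]
        S3_trunc[of "inverse ?l" j i "\<lambda>k. vh (k + 1) t"] LB_invpow_van[where u=u and t=t, OF u] that by simp
    also have "\<dots> = muT $$ j"
      unfolding muT_def by (simp add: fls_nth_sum fls_mult_const_nth)
    finally show ?thesis .
  qed
  have "(?mu * ?l ^ i * ?D) $$ (-1) = (?mu * ?W) $$ (-1)" by (simp add: mult.assoc)
  also have "\<dots> = (muT * ?W) $$ (-1)"
    by (rule fls_times_agree[where Nb="- int i - 2"]) (use agree Wv in auto)
  also have "muT * ?W = (\<Sum>x\<in>?F. fls_const (of_nat (snd x) * t x) * (?l ^ (snd x - 1 + i) * ?D))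
     + fls_const (t (0,1)) * (?l ^ i * ?D) + (\<Sum>j\<in>{1..i}. fls_const (vh (j + 1) t) * (inverse ?l ^ (j + 1) * ?l ^ i * ?D))"
    unfolding muT_def distrib_right sum_distrib_right by (simp only: power_add mult.assoc)
  also have "\<dots> $$ (-1) = (\<Sum>j\<in>{1..i}. vh (j + 1) t * (if j + 1 = i + 1 then -1 else 0))"
  proof -
    have t1: "(fls_const c * (?l ^ a * ?D)) $$ (-1) = 0" for c a
      by (simp only: fls_mult_const_nth res_pow mult_zero_right)
    have t3: "(fls_const (vh (j + 1) t) * (inverse ?l ^ (j + 1) * ?l ^ i * ?D)) $$ (-1)
       = vh (j + 1) t * (if j + 1 = i + 1 then -1 else 0)" for j
      by (simp only: fls_mult_const_nth resB[OF LB_nz[where u=u and t=t, OF u]] LB_sub[where u=u and t=t, OF u]) simp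
    show ?thesis by (simp only: fls_plus_nth fls_nth_sum t1 t3) simp
  qed
  also have "\<dots> = (\<Sum>j\<in>{1..i}. if j = i then - vh (j + 1) t else 0)"
    by (rule sum.cong) auto
  also have "\<dots> = - vh (i + 1) t" using i by (simp add: sum.delta)
  finally show ?thesis by simp
qed


lemma hasd_lax_B:
  assumes lax: "lax_eq L Lh K" and fin: "fin_times t" and mn: "m + n \<ge> 1"
    and bnd: "\<And>s k. k < N \<Longrightarrow> K (t((m,n) := s)) k = 0"
  shows "hasd (\<lambda>s. Eb (K (t((m,n) := s)))) (Eb (pbr (Hop L Lh m n) K t)) (t (m,n))"
proof -
  have d: "((\<lambda>s. K (t((m,n) := s)) k) has_field_derivative pbr (Hop L Lh m n) K t k) (at (t (m,n)))" for k
    using lax fin mn unfolding lax_eq_def by blast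
  have z: "pbr (Hop L Lh m n) K t k = 0" if "k < N" for k
    by (rule deriv_zero_fun[OF d]) (use bnd that in auto)
  have bbp: "bb (pbr (Hop L Lh m n) K t)" unfolding bb_def using z by blast
  have bbs: "bb (K (t((m,n) := s)))" for s unfolding bb_def using bnd by blast
  show ?thesis
    unfolding hasd_def
  proof (intro conjI allI)
    show "\<exists>Na. \<forall>s k. k < Na \<longrightarrow> Eb (K (t((m, n) := s))) $$ k = 0"
      by (rule exI[of _ N]) (auto simp: Eb_nth[OF bbs] bnd)
    fix k
    show "((\<lambda>s. Eb (K (t((m, n) := s))) $$ k) has_field_derivative
          Eb (pbr (Hop L Lh m n) K t) $$ k) (at (t (m, n)))"
      by (simp add: Eb_nth[OF bbs] Eb_nth[OF bbp] d)
  qed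
qed

lemma H_boundB: "k < - int n \<Longrightarrow> Hop L (Lhop u g) m n t k = 0"
  unfolding Hop_def spos_def snonpos_def by (simp add: spowLB LB_pow_van)

lemma MB_line:
  assumes "fin_times t" "\<And>t. fin_times t \<Longrightarrow> u t \<noteq> 0" "k < - (\<Sum>x\<in>suppt t \<union> {y}. int (snd x))"
  shows "Mhop (Lhop u g) vh (t(y := s)) k = 0"
  by (rule MB_bound[where u=u and t="t(y := s)", OF fin_upd[OF assms(1)] assms(2)[OF fin_upd[OF assms(1)]] suppt_upd])
     (use assms fin_suppt in auto)

lemma mainB:
  assumes u_nz: "\<And>t. fin_times t \<Longrightarrow> u t \<noteq> 0"
    and laxL: "lax_eq L (Lhop u g) (Lhop u g)" and laxM: "lax_eq L (Lhop u g) (Mhop (Lhop u g) vh)"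
    and canL: "\<And>t. fin_times t \<Longrightarrow> pbr (Lhop u g) (Mhop (Lhop u g) vh) t = sone"
    and fin: "fin_times t" and i: "i \<ge> 1" and mn: "m + n \<ge> 1"
  shows "((\<lambda>s. vh (i + 1) (t((m,n) := s))) has_field_derivative
          - sres (lmul (spow (Lhop u g t) i) (dp (Hop L (Lhop u g) m n t)))) (at (t (m,n)))"
proof -
  let ?H = "Hop L (Lhop u g) m n"
  let ?L = "Lhop u g"
  let ?M = "Mhop (Lhop u g) vh"
  let ?T = "\<lambda>s. t((m,n) := s)"
  let ?x = "t (m,n)"
  define l where "l = Eb (?L t)"
  define mu where "mu = Eb (?M t)"
  define eta where "eta = Eb (?H t)"
  define dl where "dl = Eb (pbr ?H ?L t)"
  define dm where "dm = Eb (pbr ?H ?M t)"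
  have hl: "hasd (\<lambda>s. Eb (?L (?T s))) dl ?x"
    unfolding dl_def by (rule hasd_lax_B[OF laxL fin mn, of "-1"]) (simp add: Lhop_def)
  have hm: "hasd (\<lambda>s. Eb (?M (?T s))) dm ?x"
    unfolding dm_def by (rule hasd_lax_B[OF laxM fin mn], rule MB_line[OF fin u_nz], assumption+)
  have bH: "bb (?H t')" for t' unfolding bb_def by (rule exI[of _ "- int n"]) (simp add: H_boundB)
  have bL: "bb (?L t')" for t' by (rule LB_bb)
  have bM: "bb (?M t)" by (rule MB_bb[where u=u and t=t, OF fin u_nz[OF fin]])
  have bdH: "bb (pdt (1,0) ?H t)" unfolding bb_def
    by (rule exI[of _ "- int n"]) (simp add: pdt_zero H_boundB)
  have bdL: "bb (pdt (1,0) ?L t)" unfolding bb_def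
    by (rule exI[of _ "-1"]) (simp add: pdt_zero Lhop_def)
  have bdM: "bb (pdt (1,0) ?M t)" unfolding bb_def
    by (rule exI[of _ "- (\<Sum>x\<in>suppt t \<union> {(1,0)}. int (snd x))"], intro allI impI, rule pdt_zero,
        rule MB_line[OF fin u_nz])
  have e1: "dl = fls_deriv eta * Eb (pdt (1,0) ?L t) - Eb (pdt (1,0) ?H t) * fls_deriv l"
    unfolding dl_def eta_def l_def by (rule pbr_B[OF bH bL bdH bdL])
  have e2: "dm = fls_deriv eta * Eb (pdt (1,0) ?M t) - Eb (pdt (1,0) ?H t) * fls_deriv mu"
    unfolding dm_def eta_def mu_def by (rule pbr_B[OF bH bM bdH bdM])
  have e3: "1 = fls_deriv l * Eb (pdt (1,0) ?M t) - Eb (pdt (1,0) ?L t) * fls_deriv mu"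
  proof -
    have "Eb (pbr ?L ?M t) = 1" using canL[OF fin] by (simp add: sone_fls)
    thus ?thesis unfolding l_def mu_def using pbr_B[OF bL bM bdL bdM] by simp
  qed
  have br: "1 * fls_deriv l * dm - 1 * fls_deriv mu * dl = 1 * fls_deriv eta"
  proof -
    have "fls_deriv l * dm - fls_deriv mu * dl = fls_deriv eta *
      (fls_deriv l * Eb (pdt (1,0) ?M t) - Eb (pdt (1,0) ?L t) * fls_deriv mu)"
      unfolding e1 e2 by (simp add: algebra_simps)
    thus ?thesis using e3 by simp
  qed
  have lx: "Eb (?L (?T ?x)) = l" and mx: "Eb (?M (?T ?x)) = mu"
    by (simp_all add: l_def mu_def)
  have Dres: "(1 * fls_deriv a) $$ (-1) = 0" for a :: "complex fls" by (simp add: fls_deriv_residue)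
  note c = core[where c=1 and q="-1", OF Dres hl hm, of eta i, unfolded lx mx, OF br]
  note c2 = DERIV_minus[OF c]
  have fn0: "vh (i + 1) (?T s) = - ((Eb (?M (?T s)) * Eb (?L (?T s)) ^ i * (1 * fls_deriv (Eb (?L (?T s))))) $$ (-1))" for s
    using vB[where u=u and t="?T s" and g=g and vh=vh, OF fin_upd[OF fin] u_nz[OF fin_upd[OF fin]] i]
    by (simp add: ellB_def)
  have fn: "(\<lambda>s. - ((Eb (?M (?T s)) * Eb (?L (?T s)) ^ i * (1 * fls_deriv (Eb (?L (?T s))))) $$ (-1)))
      = (\<lambda>s. vh (i + 1) (?T s))"
    by (rule ext) (simp only: fn0)
  have val: "sres (lmul (spow (?L t) i) (dp (?H t))) = (l ^ i * (1 * fls_deriv eta)) $$ (-1)"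
  proof -
    have sp: "spow (?L t) i = fls_nth (l ^ i)"
      by (rule ext) (simp add: spowLB l_def ellB_def)
    have "lmul (spow (?L t) i) (dp (?H t)) = fls_nth (Eb (spow (?L t) i) * Eb (dp (?H t)))"
      by (rule lmul_Eb) (simp_all add: sp bb_dp bH)
    moreover have "Eb (spow (?L t) i) = l ^ i" using sp by simp
    moreover have "Eb (dp (?H t)) = fls_deriv eta"
      unfolding eta_def by (simp add: Eb_dp[OF bH])
    ultimately show ?thesis by (simp add: sres_def)
  qed
  show ?thesis using c2 unfolding fn val .
qed


theorem proposition1:
  fixes f g :: "int \<Rightarrow> tm \<Rightarrow> complex" and u :: "tm \<Rightarrow> complex"
    and v vh :: "nat \<Rightarrow> tm \<Rightarrow> complex"
  defines "L \<equiv> Lop f" and "Lh \<equiv> Lhop u g"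
      and "M \<equiv> Mop (Lop f) v" and "Mh \<equiv> Mhop (Lhop u g) vh"
  assumes u_nz: "\<And>t. fin_times t \<Longrightarrow> u t \<noteq> 0"
    and laxL: "lax_eq L Lh L" and laxM: "lax_eq L Lh M"
    and laxLh: "lax_eq L Lh Lh" and laxMh: "lax_eq L Lh Mh"
    and canL: "\<And>t. fin_times t \<Longrightarrow> pbr L M t = sone"
    and canLh: "\<And>t. fin_times t \<Longrightarrow> pbr Lh Mh t = sone"
  shows "\<forall>t i m n. fin_times t \<longrightarrow> i \<ge> 1 \<longrightarrow> m + n \<ge> 1 \<longrightarrow>
      ((\<lambda>s. vh (i + 1) (t((m,n) := s))) has_field_derivative
          - sres (lmul (spow (Lh t) i) (dp (Hop L Lh m n t)))) (at (t (m,n)))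
    \<and> ((\<lambda>s. v (i + 1) (t((m,n) := s))) has_field_derivative
          sres (lmul (spow (L t) i) (dp (Hop L Lh m n t)))) (at (t (m,n)))"
proof (intro allI impI conjI)
  fix t :: tm and i m n :: nat
  assume fin: "fin_times t" and i: "i \<ge> 1" and mn: "m + n \<ge> 1"
  show "((\<lambda>s. vh (i + 1) (t((m,n) := s))) has_field_derivative
          - sres (lmul (spow (Lh t) i) (dp (Hop L Lh m n t)))) (at (t (m,n)))"
    unfolding Lh_def
    by (rule mainB[OF u_nz laxLh[unfolded Lh_def] laxMh[unfolded Lh_def Mh_def]
          canLh[unfolded Lh_def Mh_def] fin i mn])
  show "((\<lambda>s. v (i + 1) (t((m,n) := s))) has_field_derivative
          sres (lmul (spow (L t) i) (dp (Hop L Lh m n t)))) (at (t (m,n)))"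
    unfolding L_def
    by (rule mainA[OF laxL[unfolded L_def] laxM[unfolded L_def M_def]
          canL[unfolded L_def M_def] fin i mn])
qed

end
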